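(* Let $n\ge 3$ be an integer and $m=n-2$. Under uniform transmission over the binary $2$-deletion channel with input length $n$, among all ${\boldsymbol y}\in\{0,1\}^m$ the input entropy $\mathsf{H}^{\mathsf{In}}_{2\text{-}\mathsf{Del}}({\boldsymbol y})$ is minimized only by ${\boldsymbol y}=0^m$ and ${\boldsymbol y}=1^m$, and $$\min_{{\boldsymbol y}\in\{0,1\}^m}\mathsf{H}^{\mathsf{In}}_{2\text{-}\mathsf{Del}}({\boldsymbol y}) = 2+\frac34\log_2\binom{m+2}{2}-\frac12\log_2(m+1).$$
   Context: For binary sequences ${\boldsymbol x}$ of length $N$ and ${\boldsymbol y}$ of length $\ell\le N$, the embedding number $\omega_{{\boldsymbol y}}({\boldsymbol x})$ is the number of index tuples $1\le i_1<\dots<i_\ell\le N$ with $x_{i_j}=y_j$ for all $j$. The $k$-deletion channel with input length $n$ maps ${\boldsymbol x}\in\{0,1\}^n$ to ${\boldsymbol y}\in\{0,1\}^{n-k}$ with probability $\Pr\{{\boldsymbol y}\mid{\boldsymbol x}\}=\omega_{{\boldsymbol y}}({\boldsymbol x})/\binom{n}{k}$. Under uniform transmission $X$ is uniform on $\{0,1\}^n$, and $\mathsf{H}^{\mathsf{In}}_{k\text{-}\mathsf{Del}}({\boldsymbol y})=H(X\mid Y={\boldsymbol y})=-\sum_{{\boldsymbol x}}P({\boldsymbol x}\mid{\boldsymbol y})\log_2 P({\boldsymbol x}\mid{\boldsymbol y})$ with $P({\boldsymbol x}\mid {\boldsymbol y})=\Pr\{{\boldsymbol y}\mid{\boldsymbol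 x}\}/\sum_{{\boldsymbol x}'}\Pr\{{\boldsymbol y}\mid{\boldsymbol x}'\}$. $0^m$, $1^m$ denote the constant sequences of length $m$. *)

theory Defs
  imports "HOL-Analysis.Analysis"
begin

text \<open>Binary sequences are boolean lists (False = 0, True = 1).
  Index tuples i_1 < ... < i_l are represented by their index sets I of size l;
  nths x I lists the entries of x at the indices in I in increasing order.\<close>

definition embedding_number :: "bool list \<Rightarrow> bool list \<Rightarrow> nat" where
  "embedding_number y x =
     card {I. I \<subseteq> {0..<length x} \<and> card I = length y \<and> nths x I = y}"

definition binseqs :: "nat \<Rightarrow> bool list set" where
  "binseqs n = {x. length x = n}"

definition del_channel :: "nat \<Rightarrow> nat \<Rightarrow> bool list \<Rightarrow> bool list \<Rightarrow> real" where
  "del_channel n k x y = real (embedding_number y x) / real (n choose k)"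

text \<open>Posterior P(x | y) under uniform input on {0,1}^n.\<close>
definition posterior :: "nat \<Rightarrow> nat \<Rightarrow> bool list \<Rightarrow> bool list \<Rightarrow> real" where
  "posterior n k x y = del_channel n k x y / (\<Sum>x'\<in>binseqs n. del_channel n k x' y)"

definition input_entropy :: "nat \<Rightarrow> nat \<Rightarrow> bool list \<Rightarrow> real" where
  "input_entropy n k y =
     - (\<Sum>x\<in>binseqs n. (if posterior n k x y = 0 then 0
                          else posterior n k x y * log 2 (posterior n k x y)))"

end

theory Submission
  imports Defs
begin

fun emb :: "bool list \<Rightarrow> bool list \<Rightarrow> nat" where
  "emb [] x = 1"
| "emb (b#y) [] = 0"
| "emb (b#y) (a#x) = emb (b#y) x + (if a = b then emb y x else 0)"

definition EN :: "bool list \<Rightarrow> bool list \<Rightarrow> nat set set" where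
  "EN y x = {I. I \<subseteq> {0..<length x} \<and> card I = length y \<and> nths x I = y}"

lemma EN_Nil_x: "EN [] x = {{}}"
proof -
  have "I = {}" if "I \<subseteq> {0..<length x}" "card I = 0" for I
    using that finite_subset by (metis card_0_eq finite_atLeastLessThan)
  then show ?thesis unfolding EN_def by auto
qed

lemma EN_y_Nil: "EN (b#y) [] = {}"
  unfolding EN_def by auto

lemma EN_Cons_split:
  "EN (b#y) (a#x) = {I \<in> EN (b#y) (a#x). 0 \<notin> I} \<union> {I \<in> EN (b#y) (a#x). 0 \<in> I}"
  by auto

lemma shift_set: "0 \<notin> I \<Longrightarrow> I = Suc ` {j. Suc j \<in> I}"
  by (auto simp: image_iff) (metis not0_implies_Suc)

lemma shift_set0: "0 \<in> I \<Longrightarrow> I = insert 0 (Suc ` {j. Suc j \<in> I})"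
  by (auto simp: image_iff) (metis not0_implies_Suc)

lemma Suc_pre[simp]: "{j. Suc j \<in> Suc ` X} = X" by auto

lemma EN_part0: "bij_betw (image Suc) (EN (b#y) x) {I \<in> EN (b#y) (a#x). 0 \<notin> I}"
proof (rule bij_betwI')
  show "\<And>X Y. X \<in> EN (b # y) x \<Longrightarrow> Y \<in> EN (b # y) x \<Longrightarrow> (Suc ` X = Suc ` Y) = (X = Y)"
    by (simp add: inj_image_eq_iff)
  show "\<And>X. X \<in> EN (b # y) x \<Longrightarrow> Suc ` X \<in> {I \<in> EN (b # y) (a # x). 0 \<notin> I}"
    unfolding EN_def by (auto simp: nths_Cons card_image)
  fix I assume I: "I \<in> {I \<in> EN (b # y) (a # x). 0 \<notin> I}"
  let ?J = "{j. Suc j \<in> I}"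
  have e: "I = Suc ` ?J" using I shift_set by blast
  have "?J \<in> EN (b#y) x"
    using I unfolding EN_def
    apply (auto simp: nths_Cons)
    apply (metis e card_image inj_Suc inj_on_subset subset_UNIV)
    done
  then show "\<exists>X\<in>EN (b # y) x. I = Suc ` X" using e by blast
qed

lemma pre0: "{j. Suc j \<in> insert 0 (Suc ` X)} = X" by auto

lemma card_ins0: "finite X \<Longrightarrow> card (insert 0 (Suc ` X)) = Suc (card X)"
proof -
  assume f: "finite X"
  have "0 \<notin> Suc ` X" by auto
  then have "card (insert 0 (Suc ` X)) = Suc (card (Suc ` X))" using f by simp
  also have "card (Suc ` X) = card X" by (simp add: card_image)
  finally show ?thesis .
qed

lemma EN_part1: "a = b \<Longrightarrow> bij_betw (\<lambda>J. insert 0 (Suc ` J)) (EN y x) {I \<in> EN (b#y) (a#x). 0 \<in> I}"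
proof (rule bij_betwI')
  show "\<And>X Y. X \<in> EN y x \<Longrightarrow> Y \<in> EN y x \<Longrightarrow> (insert 0 (Suc ` X) = insert 0 (Suc ` Y)) = (X = Y)"
    by (metis pre0)
  assume ab: "a = b"
  show "\<And>X. X \<in> EN y x \<Longrightarrow> insert 0 (Suc ` X) \<in> {I \<in> EN (b # y) (a # x). 0 \<in> I}"
  proof -
    fix X assume X: "X \<in> EN y x"
    have f: "finite X" using X unfolding EN_def using finite_subset by blast
    have c: "card (insert 0 (Suc ` X)) = Suc (length y)" using card_ins0[OF f] X unfolding EN_def by simp
    have s: "insert 0 (Suc ` X) \<subseteq> {0..<length (a#x)}" using X unfolding EN_def by auto
    have n: "nths (a#x) (insert 0 (Suc ` X)) = b # y" using X ab unfolding EN_def by (simp add: nths_Cons pre0)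
    show "insert 0 (Suc ` X) \<in> {I \<in> EN (b # y) (a # x). 0 \<in> I}"
      using c s n unfolding EN_def by simp
  qed
  fix I assume I: "I \<in> {I \<in> EN (b # y) (a # x). 0 \<in> I}"
  let ?J = "{j. Suc j \<in> I}"
  have e: "I = insert 0 (Suc ` ?J)" using I shift_set0 by blast
  have sub: "?J \<subseteq> {0..<length x}" using I unfolding EN_def by auto
  then have fJ: "finite ?J" using finite_subset by blast
  have "card I = Suc (card ?J)" using card_ins0[OF fJ] e by simp
  then have cJ: "card ?J = length y" using I unfolding EN_def by simp
  have I0: "0 \<in> I" using I by simp
  have "nths (a#x) I = b # y" using I unfolding EN_def by simp
  then have nJ: "nths x ?J = y" using I0 by (simp add: nths_Cons)
  have "?J \<in> EN y x" using sub cJ nJ unfolding EN_def by simp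
  then show "\<exists>X\<in>EN y x. I = insert 0 (Suc ` X)" using e by blast
qed

lemma EN_finite: "finite (EN y x)"
  unfolding EN_def by (rule finite_subset[of _ "Pow {0..<length x}"]) auto

lemma emb_eq: "embedding_number y x = emb y x"
proof -
  have "card (EN y x) = emb y x"
  proof (induction x arbitrary: y)
    case Nil
    then show ?case
      by (cases y) (auto simp: EN_Nil_x EN_y_Nil)
  next
    case (Cons a x)
    show ?case
    proof (cases y)
      case Nil
      then show ?thesis by (simp add: EN_Nil_x)
    next
      case (Cons b y')
      have c0: "card {I \<in> EN (b#y') (a#x). 0 \<notin> I} = emb (b#y') x"
        using bij_betw_same_card[OF EN_part0] Cons.IH by metis
      have c1: "card {I \<in> EN (b#y') (a#x). 0 \<in> I} = (if a = b then emb y' x else 0)"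
      proof (cases "a = b")
        case True
        then show ?thesis using bij_betw_same_card[OF EN_part1[OF True]] Cons.IH by metis
      next
        case False
        have E: "{I \<in> EN (b#y') (a#x). 0 \<in> I} = {}"
          using False unfolding EN_def by (auto simp: nths_Cons)
        show ?thesis unfolding E using False by simp
      qed
      have "card (EN (b#y') (a#x)) = card {I \<in> EN (b#y') (a#x). 0 \<notin> I} + card {I \<in> EN (b#y') (a#x). 0 \<in> I}"
        by (subst EN_Cons_split) (rule card_Un_disjoint, auto intro: finite_subset[OF _ EN_finite])
      then show ?thesis using c0 c1 Cons by simp
    qed
  qed
  then show ?thesis unfolding embedding_number_def EN_def by simp
qed

lemma finite_binseqs[simp]: "finite (binseqs n)"
  unfolding binseqs_def using finite_lists_length_eq[of "UNIV::bool set" n] by simp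

lemma card_binseqs[simp]: "card (binseqs n) = 2 ^ n"
  unfolding binseqs_def using card_lists_length_eq[of "UNIV::bool set" n] by simp

lemma binseqs_0: "binseqs 0 = {[]}" by (auto simp: binseqs_def)

lemma binseqs_Suc: "binseqs (Suc n) = Cons True ` binseqs n \<union> Cons False ` binseqs n"
  unfolding binseqs_def by (auto simp: image_iff length_Suc_conv)

lemma sum_binseqs_Suc:
  "(\<Sum>x\<in>binseqs (Suc n). f x) = (\<Sum>x\<in>binseqs n. f (b#x) + f ((\<not>b)#x))"
proof -
  have "(\<Sum>x\<in>binseqs (Suc n). f x) = (\<Sum>x\<in>Cons True ` binseqs n. f x) + (\<Sum>x\<in>Cons False ` binseqs n. f x)"
    unfolding binseqs_Suc by (rule sum.union_disjoint) auto
  also have "\<dots> = (\<Sum>x\<in>binseqs n. f (True#x)) + (\<Sum>x\<in>binseqs n. f (False#x))"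
    by (simp add: sum.reindex)
  finally show ?thesis by (cases b) (auto simp: sum.distrib add.commute)
qed

lemma sum_binseqs_Cons:
  "(\<Sum>x\<in>binseqs (length (b#y) + d). f x) = (\<Sum>x\<in>binseqs (length y + d). f (b#x) + f ((\<not>b)#x))"
  using sum_binseqs_Suc[of f "length y + d" b] by simp

lemma emb_short: "length x < length y \<Longrightarrow> emb y x = 0"
  by (induction y x rule: emb.induct) auto

lemma emb_same: "length x = length y \<Longrightarrow> emb y x = (if x = y then 1 else 0)"
  by (induction y x rule: emb.induct) (auto simp: emb_short)

lemma emb_le: "emb y x \<le> length x choose length y"
proof (induction y x rule: emb.induct)
  case (3 b y a x)
  then show ?case by (auto simp: add_le_mono)
qed auto

lemma emb_rep: "emb (replicate k c) x = count_list x c choose k"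
proof (induction x arbitrary: k)
  case Nil
  then show ?case by (cases k) auto
next
  case (Cons a x)
  show ?case
  proof (cases k)
    case 0
    then show ?thesis by simp
  next
    case (Suc j)
    have "emb (replicate k c) (a#x) = emb (replicate (Suc j) c) x + (if a = c then emb (replicate j c) x else 0)"
      using Suc by simp
    also have "\<dots> = (count_list x c choose Suc j) + (if a = c then count_list x c choose j else 0)"
      using Cons.IH[of j] Cons.IH[of "Suc j"] by simp
    finally show ?thesis using Suc by simp
  qed
qed

lemma sum_indicator_one: "z \<in> binseqs k \<Longrightarrow> (\<Sum>x\<in>binseqs k. (if x = z then 1 else 0::nat)) = 1"
  by (simp add: sum.delta)

lemma S1: "(\<Sum>x\<in>binseqs (length y + 1). emb y x) = 2 * (length y + 1)"
proof (induction y)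
  case Nil
  then show ?case by (simp add: sum_binseqs_Suc[where b=True] binseqs_0)
next
  case (Cons b y)
  have "(\<Sum>x\<in>binseqs (length (b#y) + 1). emb (b#y) x) =
        (\<Sum>x\<in>binseqs (length y + 1). emb (b#y) (b#x) + emb (b#y) ((\<not>b)#x))"
    by (rule sum_binseqs_Cons)
  also have "\<dots> = (\<Sum>x\<in>binseqs (length y + 1). 2 * (if x = b#y then 1 else 0) + emb y x)"
    by (rule sum.cong) (auto simp: emb_same binseqs_def)
  also have "\<dots> = 2 * 1 + 2 * (length y + 1)"
  proof -
    have "b#y \<in> binseqs (length y + 1)" by (simp add: binseqs_def)
    then show ?thesis using Cons by (simp add: sum.distrib sum_distrib_left[symmetric] sum_indicator_one)
  qed
  finally show ?case by simp
qed

lemma S2: "(\<Sum>x\<in>binseqs (length y + 2). emb y x) = 2 * (length y + 2) * (length y + 1)"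
proof (induction y)
  case Nil
  then show ?case by (simp add: sum_binseqs_Suc[where b=True] binseqs_0 numeral_2_eq_2)
next
  case (Cons b y)
  have "(\<Sum>x\<in>binseqs (length (b#y) + 2). emb (b#y) x) =
        (\<Sum>x\<in>binseqs (length y + 2). emb (b#y) (b#x) + emb (b#y) ((\<not>b)#x))"
    by (rule sum_binseqs_Cons)
  also have "\<dots> = (\<Sum>x\<in>binseqs (length (b#y) + 1). 2 * emb (b#y) x + emb y x)"
    by (rule sum.cong) auto
  also have "\<dots> = 2 * (2 * (length (b#y) + 1)) + 2 * (length y + 2) * (length y + 1)"
    using Cons S1[of "b#y"] by (simp add: sum.distrib sum_distrib_left[symmetric])
  finally show ?case by (simp add: algebra_simps)
qed

definition sp :: "nat \<Rightarrow> bool list \<Rightarrow> nat" where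
  "sp d y = (\<Sum>x\<in>binseqs (length y + d). (if emb y x > 0 then 1 else 0))"

lemma emb_refl: "emb y y \<ge> 1"
  by (induction y) auto

lemma sp0: "sp 0 y \<ge> 1"
proof -
  have "y \<in> binseqs (length y)" by (simp add: binseqs_def)
  then have "(\<Sum>x\<in>{y}. (if emb y x > 0 then 1 else 0::nat)) \<le> sp 0 y"
    unfolding sp_def by (intro sum_mono2) auto
  then show ?thesis using emb_refl[of y] by simp
qed

lemma sp_step: "sp (Suc d) (b#y) \<ge> sp (Suc d) y + sp d (b#y)"
proof -
  have "sp (Suc d) (b#y) = (\<Sum>x\<in>binseqs (length y + Suc d). (if emb (b#y) (b#x) > 0 then 1 else 0) + (if emb (b#y) ((\<not>b)#x) > 0 then 1 else 0))"
    unfolding sp_def by (rule sum_binseqs_Cons)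
  also have "\<dots> \<ge> (\<Sum>x\<in>binseqs (length y + Suc d). (if emb y x > 0 then 1 else 0) + (if emb (b#y) x > 0 then 1 else 0))"
    by (rule sum_mono) auto
  finally show ?thesis unfolding sp_def by (simp add: sum.distrib)
qed

lemma sp1: "sp 1 y \<ge> length y + 2"
proof (induction y)
  case Nil
  then show ?case by (simp add: sp_def sum_binseqs_Suc[where b=True] binseqs_0)
next
  case (Cons b y)
  then show ?case using sp_step[where d=0 and b=b and y=y] sp0[of "b#y"] by simp
qed

lemma sp2: "2 * sp 2 y \<ge> 2 + 2 * (length y + 2) + (length y + 2) * (length y + 1)"
proof (induction y)
  case Nil
  then show ?case by (simp add: sp_def sum_binseqs_Suc[where b=True] binseqs_0 numeral_2_eq_2)
next
  case (Cons b y)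
  have "sp 2 (b#y) \<ge> sp 2 y + sp 1 (b#y)" using sp_step[where d=1 and b=b and y=y] by (simp add: numeral_2_eq_2)
  then show ?case using Cons sp1[of "b#y"] by (simp add: algebra_simps)
qed

lemma count_list_rep[simp]: "count_list (replicate k c) c = k"
  by (induction k) auto

definition Ex1 :: "bool list \<Rightarrow> nat" where
  "Ex1 y = (\<Sum>x\<in>binseqs (length y + 1). emb y x - 1)"

definition Ex2 :: "bool list \<Rightarrow> nat" where
  "Ex2 y = (\<Sum>x\<in>binseqs (length y + 2). emb y x - (length y + 1))"

lemma Ex1_le: "Ex1 y \<le> length y"
proof (induction y)
  case Nil
  then show ?case by (simp add: Ex1_def sum_binseqs_Suc[where b=True] binseqs_0)
next
  case (Cons b y)
  have "Ex1 (b#y) = (\<Sum>x\<in>binseqs (length y + 1). (emb (b#y) (b#x) - 1) + (emb (b#y) ((\<not>b)#x) - 1))"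
    unfolding Ex1_def by (rule sum_binseqs_Cons)
  also have "\<dots> \<le> (\<Sum>x\<in>binseqs (length y + 1). (if x = b#y then 1 else 0) + (emb y x - 1))"
    by (rule sum_mono) (auto simp: emb_same binseqs_def)
  also have "\<dots> = 1 + Ex1 y"
  proof -
    have "b#y \<in> binseqs (length y + 1)" by (simp add: binseqs_def)
    then show ?thesis by (simp add: sum.distrib Ex1_def sum_indicator_one)
  qed
  finally show ?case using Cons by simp
qed

lemma emb_notin: "b \<notin> set x \<Longrightarrow> emb (b#y) x = 0"
  by (induction x) auto

lemma Ex2_pt: "x \<in> binseqs (length y + 2) \<Longrightarrow>
   (emb (b#y) (b#x) - (length y + 2)) + (emb (b#y) ((\<not>b)#x) - (length y + 2))
    \<le> (emb (b#y) x - 1) + (emb y x - (length y + 1))"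
proof -
  assume x: "x \<in> binseqs (length y + 2)"
  have "emb (b#y) x \<le> length x choose length (b#y)" by (rule emb_le)
  also have "\<dots> = length y + 2" using x by (simp add: binseqs_def)
  finally have le: "emb (b#y) x \<le> length y + 2" .
  show ?thesis using le by simp
qed

lemma Ex2_step: "Ex2 (b#y) \<le> Ex1 (b#y) + Ex2 y"
proof -
  have "Ex2 (b#y) = (\<Sum>x\<in>binseqs (length y + 2). (emb (b#y) (b#x) - (length y + 2)) + (emb (b#y) ((\<not>b)#x) - (length y + 2)))"
    unfolding Ex2_def by (subst sum_binseqs_Cons) simp
  also have "\<dots> \<le> (\<Sum>x\<in>binseqs (length y + 2). (emb (b#y) x - 1) + (emb y x - (length y + 1)))"
    by (rule sum_mono) (rule Ex2_pt)
  also have "\<dots> = Ex1 (b#y) + Ex2 y"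
    by (simp add: sum.distrib Ex1_def Ex2_def)
  finally show ?thesis .
qed

lemma choose2_big: "k \<ge> 1 \<Longrightarrow> (k + 2 choose k) > k + 1"
proof -
  assume k: "k \<ge> 1"
  have "(k + 2 choose k) = (k+2 choose 2)" using binomial_symmetric[of k "k+2"] by simp
  also have "\<dots> = (k+2)*(k+1) div 2" by (simp add: choose_two)
  also have "\<dots> \<ge> (2*(k+2)) div 2"
  proof (intro div_le_mono)
    have h1: "1 \<le> k*k" using k by (simp add: one_le_mult_iff)
    have h2: "(k+2)*(k+1) = k*k + 3*k + 2" by (simp add: algebra_simps)
    have h3: "2*(k+2) = 2*k + 4" by simp
    show "2*(k+2) \<le> (k+2)*(k+1)" unfolding h2 h3 using h1 k by linarith
  qed
  finally show ?thesis by simp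
qed

lemma Ex2_step_strict:
  assumes k: "k \<ge> 1" shows "Ex2 (b # replicate k (\<not>b)) < Ex1 (b # replicate k (\<not>b)) + Ex2 (replicate k (\<not>b))"
proof -
  let ?y = "replicate k (\<not>b)"
  let ?x0 = "replicate (k+2) (\<not>b)"
  have x0: "?x0 \<in> binseqs (length ?y + 2)" by (simp add: binseqs_def)
  have e1: "emb (b#?y) ?x0 = 0" by (rule emb_notin) simp
  have e2: "emb ?y ?x0 = (k+2 choose k)" by (simp add: emb_rep)
  have "Ex2 (b#?y) = (\<Sum>x\<in>binseqs (length ?y + 2). (emb (b#?y) (b#x) - (length ?y + 2)) + (emb (b#?y) ((\<not>b)#x) - (length ?y + 2)))"
    unfolding Ex2_def by (subst sum_binseqs_Cons) simp
  also have "\<dots> < (\<Sum>x\<in>binseqs (length ?y + 2). (emb (b#?y) x - 1) + (emb ?y x - (length ?y + 1)))"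
  proof (rule sum_strict_mono_ex1)
    show "finite (binseqs (length ?y + 2))" by simp
    show "\<forall>x\<in>binseqs (length ?y + 2). (emb (b#?y) (b#x) - (length ?y + 2)) + (emb (b#?y) ((\<not>b)#x) - (length ?y + 2))
      \<le> (emb (b#?y) x - 1) + (emb ?y x - (length ?y + 1))" using Ex2_pt by blast
    have "(emb (b#?y) (b#?x0) - (length ?y + 2)) + (emb (b#?y) ((\<not>b)#?x0) - (length ?y + 2))
      < (emb (b#?y) ?x0 - 1) + (emb ?y ?x0 - (length ?y + 1))"
    proof -
      have "emb (b#?y) ((\<not>b)#?x0) = 0" by (rule emb_notin) simp
      moreover have "emb (b#?y) (b#?x0) = emb ?y ?x0" using e1 by simp
      ultimately show ?thesis using e1 e2 choose2_big[OF k] by simp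
    qed
    then show "\<exists>x\<in>binseqs (length ?y + 2). (emb (b#?y) (b#x) - (length ?y + 2)) + (emb (b#?y) ((\<not>b)#x) - (length ?y + 2))
      < (emb (b#?y) x - 1) + (emb ?y x - (length ?y + 1))" using x0 by blast
  qed
  also have "\<dots> = Ex1 (b#?y) + Ex2 ?y"
    by (simp add: sum.distrib Ex1_def Ex2_def)
  finally show ?thesis .
qed

lemma arith_aux: "(k+1+1)*(k+1) = (k+1)*k + 2*(k+1::nat)" by (simp add: algebra_simps)

lemma lin1: "(E::nat) \<le> A + B \<Longrightarrow> A \<le> K \<Longrightarrow> 2*B \<le> P \<Longrightarrow> 2*E \<le> P + 2*K" by linarith
lemma lin2: "(E::nat) \<le> A + B \<Longrightarrow> A \<le> K \<Longrightarrow> 2*B < P \<Longrightarrow> 2*E < P + 2*K" by linarith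
lemma lin3: "(E::nat) < A + B \<Longrightarrow> A \<le> K \<Longrightarrow> 2*B \<le> P \<Longrightarrow> 2*E < P + 2*K" by linarith

lemma Ex2_le: "2 * Ex2 y \<le> (length y + 1) * length y"
proof (induction y)
  case Nil
  then show ?case by (simp add: Ex2_def sum_binseqs_Suc[where b=True] binseqs_0 numeral_2_eq_2)
next
  case (Cons b y)
  have a: "Ex2 (b#y) \<le> Ex1 (b#y) + Ex2 y" by (rule Ex2_step)
  have c: "Ex1 (b#y) \<le> length y + 1" using Ex1_le[of "b#y"] by simp
  show ?case unfolding length_Cons Suc_eq_plus1 arith_aux using lin1[OF a c Cons.IH] .
qed

lemma Ex2_lt: "True \<in> set y \<Longrightarrow> False \<in> set y \<Longrightarrow> 2 * Ex2 y < (length y + 1) * length y"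
proof (induction y)
  case Nil
  then show ?case by simp
next
  case (Cons b y)
  have c: "Ex1 (b#y) \<le> length y + 1" using Ex1_le[of "b#y"] by simp
  show ?case
  proof (cases "True \<in> set y \<and> False \<in> set y")
    case True
    have a: "Ex2 (b#y) \<le> Ex1 (b#y) + Ex2 y" by (rule Ex2_step)
    have "2 * Ex2 y < (length y + 1) * length y" using Cons.IH True by blast
    then show ?thesis unfolding length_Cons Suc_eq_plus1 arith_aux using lin2[OF a c] by blast
  next
    case False
    have nb: "(\<not>b) \<in> set y" using Cons.prems by (cases b) auto
    have bn: "b \<notin> set y" using False nb by (cases b) auto
    have all: "\<forall>z\<in>set y. z = (\<not>b)"
    proof
      fix z assume "z \<in> set y"
      with bn show "z = (\<not>b)" by (cases z; cases b) auto
    qed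
    have yr: "y = replicate (length y) (\<not>b)"
      using replicate_length_same[OF all] by simp
    have k: "length y \<ge> 1" using nb by (cases y) auto
    have a: "Ex2 (b#y) < Ex1 (b#y) + Ex2 y"
      using Ex2_step_strict[OF k, of b] yr by simp
    have "2 * Ex2 y \<le> (length y + 1) * length y" by (rule Ex2_le)
    then show ?thesis unfolding length_Cons Suc_eq_plus1 arith_aux using lin3[OF a c] by blast
  qed
qed

definition phi :: "real \<Rightarrow> real" where "phi t = t * ln t"

lemma phi_convex: "convex_on {0<..} phi"
proof (rule convex_on_realI[where f' = "\<lambda>t. ln t + 1"])
  show "connected {0::real<..}" by simp
  show "\<And>x. x \<in> {0<..} \<Longrightarrow> (phi has_real_derivative ln x + 1) (at x)"
    unfolding phi_def by (auto intro!: derivative_eq_intros)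
  show "\<And>x y::real. x \<in> {0<..} \<Longrightarrow> y \<in> {0<..} \<Longrightarrow> x \<le> y \<Longrightarrow> ln x + 1 \<le> ln y + 1"
    by (simp add: ln_le_cancel_iff)
qed

lemma phi_chord:
  assumes "0 < p" "p < q" "p \<le> t" "t \<le> q"
  shows "phi t \<le> phi p + (phi q - phi p) / (q - p) * (t - p)"
proof -
  define u where "u = (t - p) / (q - p)"
  have u0: "0 \<le> u" and u1: "u \<le> 1" using assms by (auto simp: u_def field_simps)
  have "phi ((1 - u) *\<^sub>R p + u *\<^sub>R q) \<le> (1 - u) * phi p + u * phi q"
    using convex_onD[OF phi_convex] u0 u1 assms by auto
  moreover have "(1 - u) *\<^sub>R p + u *\<^sub>R q = t"
  proof -
    have uq: "u * (q - p) = t - p" using assms by (simp add: u_def)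
    have "(1 - u) *\<^sub>R p + u *\<^sub>R q = p + u * (q - p)" by (simp add: algebra_simps)
    then show ?thesis using uq by simp
  qed
  moreover have "(1 - u) * phi p + u * phi q = phi p + (phi q - phi p) / (q - p) * (t - p)"
  proof -
    have "(1 - u) * phi p + u * phi q = phi p + u * (phi q - phi p)" by (simp add: algebra_simps)
    also have "u * (phi q - phi p) = (phi q - phi p) / (q - p) * (t - p)" by (simp add: u_def)
    finally show ?thesis .
  qed
  ultimately show ?thesis by simp
qed

lemma phi_tangent_strict:
  assumes "0 < t" "0 < L" "t \<noteq> L"
  shows "phi t > phi L + (ln L + 1) * (t - L)"
proof -
  have u: "0 < L / t" "L / t \<noteq> 1" using assms by auto
  have le: "ln (L/t) \<le> L/t - 1" using ln_le_minus_one u by simp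
  have ne: "ln (L/t) \<noteq> L/t - 1" using ln_eq_minus_one u by blast
  have "ln L - ln t < L/t - 1" using le ne ln_div[of L t] assms by simp
  then have "t * (ln L - ln t) < t * (L/t - 1)" using assms by simp
  then have "t * ln L - t * ln t < L - t" using assms by (simp add: algebra_simps)
  then show ?thesis unfolding phi_def by (simp add: algebra_simps)
qed

lemma phi_1[simp]: "phi 1 = 0" by (simp add: phi_def)
lemma phi_0[simp]: "phi 0 = 0" by (simp add: phi_def)

lemma beta_pos:
  fixes l N :: real
  assumes "1 < l" "l < N"
  shows "(phi N - phi l) / (N - l) - phi l / (l - 1) > 0"
proof -
  have a: "phi 1 > phi l + (ln l + 1) * (1 - l)" using phi_tangent_strict[of 1 l] assms by simp
  have b: "phi N > phi l + (ln l + 1) * (N - l)" using phi_tangent_strict[of N l] assms by simp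
  have "phi l / (l - 1) < ln l + 1" using a assms by (simp add: field_simps)
  moreover have "(phi N - phi l) / (N - l) > ln l + 1" using b assms by (simp add: field_simps)
  ultimately show ?thesis by simp
qed

lemma aux_lin: "(a::real) \<le> b + s*(k-l) \<Longrightarrow> b = \<alpha>*(l-1) \<Longrightarrow> a \<le> \<alpha>*(k-1) + (s-\<alpha>)*(k-l)"
proof -
  assume "a \<le> b + s*(k-l)" "b = \<alpha>*(l-1)"
  moreover have "\<alpha>*(k-1) + (s-\<alpha>)*(k-l) = \<alpha>*(l-1) + s*(k-l)" by (simp add: algebra_simps)
  ultimately show ?thesis by simp
qed

lemma majorant:
  fixes k l N :: nat
  assumes "1 < l" "l < N" "k \<le> N"
  shows "phi (real k) \<le> phi l / (real l - 1) * real (k - 1)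
          + ((phi N - phi l) / (real N - real l) - phi l / (real l - 1)) * real (k - l)"
proof (cases "k = 0")
  case True
  then show ?thesis by simp
next
  case False
  show ?thesis
  proof (cases "k \<le> l")
    case True
    have "phi (real k) \<le> phi 1 + (phi l - phi 1) / (real l - 1) * (real k - 1)"
      using phi_chord[of 1 "real l" "real k"] assms True False by simp
    then show ?thesis using True False by (simp add: of_nat_diff)
  next
    case kl: False
    have "phi (real k) \<le> phi l + (phi N - phi l) / (real N - real l) * (real k - real l)"
      using phi_chord[of "real l" "real N" "real k"] assms kl by simp
    moreover have "phi l = phi l / (real l - 1) * (real l - 1)" using assms by simp
    ultimately have "phi (real k) \<le> phi l / (real l - 1) * (real k - 1)
          + ((phi N - phi l) / (real N - real l) - phi l / (real l - 1)) * (real k - real l)"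
      by (rule aux_lin)
    then show ?thesis using kl False by (simp add: of_nat_diff)
  qed
qed

lemma choose2_real: "2 * (k choose 2) = k * (k - 1)"
proof (induction k)
  case 0 then show ?case by simp
next
  case (Suc k)
  have "(Suc k choose 2) = (k choose 2) + k" by (simp add: numeral_2_eq_2)
  then show ?case using Suc by (cases k) (simp_all add: algebra_simps)
qed

lemma count_sum:
  fixes f :: "nat \<Rightarrow> real"
  shows "(\<Sum>x\<in>binseqs n. f (count_list x c)) = (\<Sum>k\<le>n. real (n choose k) * f k)"
proof (induction n arbitrary: f)
  case 0
  then show ?case by (simp add: binseqs_0)
next
  case (Suc n)
  have "(\<Sum>x\<in>binseqs (Suc n). f (count_list x c)) = (\<Sum>x\<in>binseqs n. f (Suc (count_list x c)) + f (count_list x c))"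
    using sum_binseqs_Suc[of "\<lambda>x. f (count_list x c)" n c] by simp
  also have "\<dots> = (\<Sum>k\<le>n. real (n choose k) * f (Suc k)) + (\<Sum>k\<le>n. real (n choose k) * f k)"
    using Suc.IH[of "\<lambda>k. f (Suc k)"] Suc.IH[of f] by (simp add: sum.distrib)
  also have "(\<Sum>k\<le>n. real (n choose k) * f k) = f 0 + (\<Sum>k\<le>n. real (n choose Suc k) * f (Suc k))"
  proof -
    have "(\<Sum>k\<le>Suc n. real (n choose k) * f k) = f 0 + (\<Sum>k\<le>n. real (n choose Suc k) * f (Suc k))"
      by (subst sum.atMost_Suc_shift) simp
    moreover have "(\<Sum>k\<le>Suc n. real (n choose k) * f k) = (\<Sum>k\<le>n. real (n choose k) * f k)"
      by simp
    ultimately show ?thesis by simp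
  qed
  also have "(\<Sum>k\<le>n. real (n choose k) * f (Suc k)) + (f 0 + (\<Sum>k\<le>n. real (n choose Suc k) * f (Suc k)))
      = (\<Sum>k\<le>Suc n. real (Suc n choose k) * f k)"
    by (subst sum.atMost_Suc_shift) (simp add: sum.distrib algebra_simps)
  finally show ?case .
qed

definition F :: "bool list \<Rightarrow> real" where
  "F y = (\<Sum>x\<in>binseqs (length y + 2). phi (real (emb y x)))"

lemma F_const:
  assumes "m \<ge> 1"
  shows "F (replicate m c) = phi (real (m + 2 choose 2)) + real (m + 2) * phi (real (m + 1))"
proof -
  have "F (replicate m c) = (\<Sum>k\<le>m+2. real (m + 2 choose k) * phi (real (k choose m)))"
    unfolding F_def by (simp add: emb_rep count_sum[of "\<lambda>k. phi (real (k choose m))"])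
  also have "\<dots> = (\<Sum>k<m. real (m + 2 choose k) * phi (real (k choose m)))
        + real (m + 2 choose m) * phi (real (m choose m))
        + real (m + 2 choose (m+1)) * phi (real ((m+1) choose m))
        + real (m + 2 choose (m+2)) * phi (real ((m+2) choose m))"
    by (simp add: lessThan_Suc_atMost[symmetric])
  also have "(\<Sum>k<m. real (m + 2 choose k) * phi (real (k choose m))) = 0"
    by (rule sum.neutral) (simp add: binomial_eq_0)
  also have "(m + 2 choose (m+1)) = m + 2"
    using binomial_symmetric[of 1 "m+2"] by simp
  also have "((m+1) choose m) = m + 1"
    using binomial_symmetric[of 1 "m+1"] by simp
  also have "((m+2) choose m) = (m + 2 choose 2)"
    using binomial_symmetric[of m "m+2"] by simp
  finally show ?thesis by simp
qed

lemma post_eq: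
  assumes "length y = m"
  shows "posterior (m+2) 2 x y = real (emb y x) / real (2*(m+2)*(m+1))"
proof -
  define S where "S = real (2*(m+2)*(m+1))"
  define C where "C = real ((m+2) choose 2)"
  have C: "C > 0" unfolding C_def by simp
  have S: "S > 0" unfolding S_def by (rule of_nat_0_less_iff[THEN iffD2]) simp
  have "(\<Sum>x'\<in>binseqs (m+2). del_channel (m+2) 2 x' y) = (\<Sum>x'\<in>binseqs (m+2). real (emb y x')) / C"
    unfolding del_channel_def emb_eq C_def by (simp add: sum_divide_distrib)
  also have "(\<Sum>x'\<in>binseqs (m+2). real (emb y x')) = S"
    using S2[of y] assms unfolding S_def by (simp only: of_nat_sum[symmetric])
  finally have d: "(\<Sum>x'\<in>binseqs (m+2). del_channel (m+2) 2 x' y) = S / C" .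
  have "posterior (m+2) 2 x y = (real (emb y x) / C) / (S / C)"
    unfolding posterior_def d unfolding del_channel_def emb_eq C_def by simp
  also have "\<dots> = real (emb y x) / S" using C S by (simp add: field_simps)
  finally show ?thesis unfolding S_def .
qed

lemma term_eq:
  fixes w S :: real
  assumes "0 \<le> w" "0 < S"
  shows "(if w / S = 0 then 0 else w / S * log 2 (w / S)) = phi w / (ln 2 * S) - w / S * log 2 S"
proof (cases "w = 0")
  case True
  then show ?thesis by simp
next
  case False
  then have w: "w > 0" using assms by simp
  have l: "log 2 (w / S) = (ln w - ln S) / ln 2" using w assms by (simp add: log_def ln_div)
  have l2: "ln (w / S) = ln w - ln S" using w assms by (simp add: ln_div)
  have "w / S * log 2 (w / S) = phi w / (ln 2 * S) - w / S * log 2 S"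
    using assms w by (simp add: l2 phi_def log_def field_simps)
  then show ?thesis using w assms by simp
qed

lemma H_eq:
  assumes "length y = m"
  shows "input_entropy (m+2) 2 y = log 2 (real (2*(m+2)*(m+1))) - F y / (ln 2 * real (2*(m+2)*(m+1)))"
proof -
  define S where "S = real (2*(m+2)*(m+1))"
  have S: "S > 0" unfolding S_def by (rule of_nat_0_less_iff[THEN iffD2]) simp
  have sw: "(\<Sum>x\<in>binseqs (m+2). real (emb y x)) = S"
    using S2[of y] assms unfolding S_def by (simp only: of_nat_sum[symmetric])
  have "input_entropy (m+2) 2 y = - (\<Sum>x\<in>binseqs (m+2). phi (real (emb y x)) / (ln 2 * S) - real (emb y x) / S * log 2 S)"
    unfolding input_entropy_def post_eq[OF assms] S_def[symmetric]
    by (rule arg_cong[where f=uminus], rule sum.cong, simp, rule term_eq) (use S in auto)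
  also have "\<dots> = - ((\<Sum>x\<in>binseqs (m+2). phi (real (emb y x))) / (ln 2 * S) - (\<Sum>x\<in>binseqs (m+2). real (emb y x)) / S * log 2 S)"
    by (simp add: sum_subtractf sum_divide_distrib sum_distrib_right)
  also have "\<dots> = log 2 S - F y / (ln 2 * S)"
    using sw S assms unfolding F_def by simp
  finally show ?thesis unfolding S_def .
qed

lemma ident:
  fixes m u v :: real
  assumes "m > 0"
  shows "u / m * (2*(m+2)*(m+1) - (1 + (m+2) + (m+2)*(m+1)/2))
       + ((v - u) / ((m+2)*(m+1)/2 - (m+1)) - u / m) * ((m+1)*m/2) = v + (m+2)*u"
proof -
  have d: "(m+2)*(m+1)/2 - (m+1) = (m+1)*m/2" by (simp add: field_simps)
  have e: "2*(m+2)*(m+1) - (1 + (m+2) + (m+2)*(m+1)/2) - (m+1)*m/2 = m*(m+3)"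
    by (simp add: field_simps)
  define X where "X = 2*(m+2)*(m+1) - (1 + (m+2) + (m+2)*(m+1)/2)"
  define Y where "Y = (m+1)*m/2"
  have Y0: "Y \<noteq> 0" using assms by (simp add: Y_def)
  have f: "(v - u) / Y * Y = v - u" using Y0 by simp
  have g: "((v - u) / Y - u / m) * Y = (v - u) - u / m * Y" using f by (simp add: left_diff_distrib)
  have "u / m * X + ((v - u) / Y - u / m) * Y = u / m * (X - Y) + (v - u)"
    unfolding g by (simp add: right_diff_distrib)
  also have "X - Y = m * (m + 3)" using e unfolding X_def Y_def .
  also have "u / m * (m * (m + 3)) = u * (m + 3)" using assms by simp
  finally have "u / m * X + ((v - u) / Y - u / m) * Y = u * (m + 3) + (v - u)" .
  then have "u / m * (2*(m+2)*(m+1) - (1 + (m+2) + (m+2)*(m+1)/2))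
       + ((v - u) / ((m+2)*(m+1)/2 - (m+1)) - u / m) * ((m+1)*m/2) = u * (m + 3) + (v - u)"
    unfolding X_def Y_def d .
  then show ?thesis by (simp add: algebra_simps)
qed

lemma sum_minus1:
  "(\<Sum>x\<in>binseqs k. emb y x - 1) + (\<Sum>x\<in>binseqs k. (if emb y x > 0 then 1 else 0)) = (\<Sum>x\<in>binseqs k. emb y x)"
  by (simp add: sum.distrib[symmetric]) (rule sum.cong, auto)

lemma F_bound:
  assumes len: "length y = m" and m1: "m \<ge> 1"
  shows "F y \<le> phi (real (m + 2 choose 2)) + real (m + 2) * phi (real (m + 1))"
    and "True \<in> set y \<Longrightarrow> False \<in> set y \<Longrightarrow> F y < phi (real (m + 2 choose 2)) + real (m + 2) * phi (real (m + 1))"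
proof -
  define l where "l = m + 1"
  define N where "N = (m + 2 choose 2)"
  define \<alpha> where "\<alpha> = phi l / (real l - 1)"
  define \<beta> where "\<beta> = (phi N - phi l) / (real N - real l) - phi l / (real l - 1)"
  have l1: "1 < l" using m1 by (simp add: l_def)
  have N2: "2 * N = (m+2)*(m+1)" unfolding N_def using choose2_real[of "m+2"] by simp
  have lN: "l < N"
  proof -
    have "(m + 2 choose m) = N" unfolding N_def using binomial_symmetric[of m "m+2"] by simp
    then show ?thesis using choose2_big[OF m1] by (simp add: l_def)
  qed
  have wN: "emb y x \<le> N" if "x \<in> binseqs (m+2)" for x
  proof -
    have "emb y x \<le> (m+2) choose m" using emb_le[of y x] that len by (simp add: binseqs_def)
    also have "\<dots> = N" unfolding N_def using binomial_symmetric[of m "m+2"] by simp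
    finally show ?thesis .
  qed
  have \<alpha>0: "\<alpha> \<ge> 0" using l1 unfolding \<alpha>_def phi_def by simp
  have \<beta>0: "\<beta> > 0" unfolding \<beta>_def using beta_pos[of "real l" "real N"] l1 lN by simp
  have "F y \<le> (\<Sum>x\<in>binseqs (m+2). \<alpha> * real (emb y x - 1) + \<beta> * real (emb y x - l))"
    unfolding F_def len \<alpha>_def \<beta>_def
    by (rule sum_mono) (rule majorant[OF l1 lN wN])
  also have "\<dots> = \<alpha> * real (\<Sum>x\<in>binseqs (m+2). emb y x - 1) + \<beta> * real (Ex2 y)"
    unfolding Ex2_def len l_def by (simp add: sum.distrib sum_distrib_left)
  finally have Fle: "F y \<le> \<alpha> * real (\<Sum>x\<in>binseqs (m+2). emb y x - 1) + \<beta> * real (Ex2 y)" .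
  have A: "real (\<Sum>x\<in>binseqs (m+2). emb y x - 1) \<le> 2*(m+2)*(m+1) - (1 + (m+2) + (m+2)*(m+1)/2)"
  proof -
    have "(\<Sum>x\<in>binseqs (m+2). emb y x - 1) + sp 2 y = 2 * (m+2) * (m+1)"
      using sum_minus1[where k="m+2" and y=y] S2[of y] len unfolding sp_def by simp
    moreover have "2 * sp 2 y \<ge> 2 + 2 * (m + 2) + (m + 2) * (m + 1)" using sp2[of y] len by simp
    ultimately have "2 * real (\<Sum>x\<in>binseqs (m+2). emb y x - 1) \<le> 2 * (2*(m+2)*(m+1)) - (2 + 2 * (m + 2) + (m + 2) * (m + 1))"
      by (simp only: of_nat_add[symmetric] of_nat_mult[symmetric] of_nat_le_iff)
    then show ?thesis by (simp add: field_simps)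
  qed
  have Eb: "real (Ex2 y) \<le> (m+1)*m/2"
  proof -
    have "2 * Ex2 y \<le> (m+1)*m" using Ex2_le[of y] len by simp
    then have "real (2 * Ex2 y) \<le> real ((m+1)*m)" by (simp only: of_nat_le_iff)
    then show ?thesis by (simp add: field_simps)
  qed
  have iden: "\<alpha> * (2*(m+2)*(m+1) - (1 + (m+2) + (m+2)*(m+1)/2)) + \<beta> * ((m+1)*m/2)
      = phi (real (m + 2 choose 2)) + real (m + 2) * phi (real (m + 1))"
  proof -
    have rN: "real N = (m+2)*(m+1)/2" using N2 by (simp add: field_simps flip: of_nat_mult)
    define u where "u = phi (real l)"
    define v where "v = phi (real N)"
    have a: "\<alpha> = u / real m" unfolding \<alpha>_def u_def by (simp add: l_def)
    have b: "\<beta> = (v - u) / ((real m+2)*(real m+1)/2 - (real m+1)) - u / real m"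
    proof -
      have den: "real N - real l = (real m+2)*(real m+1)/2 - (real m+1)" using rN by (simp add: l_def algebra_simps)
      show ?thesis unfolding \<beta>_def u_def v_def den by (simp add: l_def)
    qed
    have m0: "real m > 0" using m1 by simp
    have "\<alpha> * (2*(real m+2)*(real m+1) - (1 + (real m+2) + (real m+2)*(real m+1)/2)) + \<beta> * ((real m+1)*real m/2)
        = v + (real m + 2) * u"
      unfolding a b by (rule ident[OF m0])
    moreover have "v = phi (real (m + 2 choose 2))" unfolding v_def N_def ..
    moreover have "u = phi (real (m + 1))" unfolding u_def l_def ..
    ultimately show ?thesis by (simp add: algebra_simps)
  qed
  have main: "\<alpha> * real (\<Sum>x\<in>binseqs (m+2). emb y x - 1) + \<beta> * real (Ex2 y)
      \<le> \<alpha> * (2*(m+2)*(m+1) - (1 + (m+2) + (m+2)*(m+1)/2)) + \<beta> * ((m+1)*m/2)"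
    by (rule add_mono[OF mult_left_mono[OF A \<alpha>0] mult_left_mono[OF Eb less_imp_le[OF \<beta>0]]])
  show "F y \<le> phi (real (m + 2 choose 2)) + real (m + 2) * phi (real (m + 1))"
    using Fle main iden by linarith
  assume "True \<in> set y" "False \<in> set y"
  then have "2 * Ex2 y < (length y + 1) * length y" by (rule Ex2_lt)
  then have "2 * Ex2 y < (m+1)*m" using len by simp
  then have "real (2 * Ex2 y) < real ((m+1)*m)" by (simp only: of_nat_less_iff)
  then have Eb2: "real (Ex2 y) < (m+1)*m/2" by (simp add: field_simps)
  have "\<alpha> * real (\<Sum>x\<in>binseqs (m+2). emb y x - 1) + \<beta> * real (Ex2 y)
      < \<alpha> * (2*(m+2)*(m+1) - (1 + (m+2) + (m+2)*(m+1)/2)) + \<beta> * ((m+1)*m/2)"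
    by (rule add_le_less_mono[OF mult_left_mono[OF A \<alpha>0] mult_strict_left_mono[OF Eb2 \<beta>0]])
  then show "F y < phi (real (m + 2 choose 2)) + real (m + 2) * phi (real (m + 1))"
    using Fle iden by linarith
qed

lemma nonconst:
  assumes "length y = m" "y \<noteq> replicate m False" "y \<noteq> replicate m True"
  shows "True \<in> set y" "False \<in> set y"
proof -
  show "True \<in> set y"
  proof (rule ccontr)
    assume "True \<notin> set y"
    then have "\<forall>x\<in>set y. x = False" by (metis (full_types))
    then have "replicate (length y) False = y" by (rule replicate_length_same)
    then show False using assms by simp
  qed
  show "False \<in> set y"
  proof (rule ccontr)
    assume "False \<notin> set y"
    then have "\<forall>x\<in>set y. x = True" by (metis (full_types))
    then have "replicate (length y) True = y" by (rule replicate_length_same)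
    then show False using assms by simp
  qed
qed

theorem theorem9:
  fixes n m :: nat
  assumes "n \<ge> 3" and "m = n - 2"
  shows "{y \<in> binseqs m. \<forall>z\<in>binseqs m. input_entropy n 2 y \<le> input_entropy n 2 z}
            = {replicate m False, replicate m True} \<and>
         (MIN y\<in>binseqs m. input_entropy n 2 y)
            = 2 + 3/4 * log 2 (real ((m + 2) choose 2)) - 1/2 * log 2 (real (m + 1))"
proof -
  have m1: "m \<ge> 1" and n: "n = m + 2" using assms by auto
  define H0 where "H0 = 2 + 3/4 * log 2 (real ((m + 2) choose 2)) - 1/2 * log 2 (real (m + 1))"
  define S where "S = real (2*(m+2)*(m+1))"
  define F0 where "F0 = phi (real (m + 2 choose 2)) + real (m + 2) * phi (real (m + 1))"
  define N where "N = real (m + 2 choose 2)"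
  define L where "L = real (m + 1)"
  have S0: "S > 0" unfolding S_def by (rule of_nat_0_less_iff[THEN iffD2]) simp
  have ln2: "ln 2 > (0::real)" by simp
  have HF: "input_entropy n 2 y = log 2 S - F y / (ln 2 * S)" if "y \<in> binseqs m" for y
  proof -
    have "length y = m" using that by (simp add: binseqs_def)
    from H_eq[OF this] show ?thesis unfolding n S_def .
  qed
  have N2: "2 * N = real (m+2) * real (m+1)"
  proof -
    have "2 * (m + 2 choose 2) = (m+2) * (m+1)" using choose2_real[of "m+2"] by simp
    then have "real (2 * (m + 2 choose 2)) = real ((m+2) * (m+1))" by (simp only:)
    then show ?thesis unfolding N_def by (simp add: algebra_simps)
  qed
  have Npos: "N > 0" unfolding N_def by simp
  have Lpos: "L > 0" unfolding L_def by simp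
  have SN: "S = 4 * N"
  proof -
    have "S = 2 * (real (m+2) * real (m+1))" unfolding S_def by (simp only: of_nat_mult of_nat_numeral mult.assoc)
    also have "\<dots> = 4 * N" using N2 by simp
    finally show ?thesis .
  qed
  have F0e: "F0 = N * ln N + 2 * N * ln L"
  proof -
    have "F0 = N * ln N + (real (m+2) * real (m+1)) * ln L"
      unfolding F0_def phi_def N_def L_def by simp
    then show ?thesis using N2 by simp
  qed
  have lnS: "ln S = 2 * ln 2 + ln N"
  proof -
    have "ln S = ln (2 * (2 * N))" using SN by simp
    also have "\<dots> = ln 2 + ln (2 * N)" using Npos by (intro ln_mult_pos) auto
    also have "ln (2 * N) = ln 2 + ln N" using Npos by (intro ln_mult_pos) auto
    finally show ?thesis by simp
  qed
  have H0eq: "log 2 S - F0 / (ln 2 * S) = H0"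
  proof -
    have "log 2 S - F0 / (ln 2 * S) = (2 * ln 2 + ln N) / ln 2 - (N * ln N + 2 * N * ln L) / (ln 2 * (4 * N))"
      unfolding log_def lnS unfolding F0e SN ..
    also have "\<dots> = 2 + 3/4 * (ln N / ln 2) - 1/2 * (ln L / ln 2)"
      using ln2 Npos by (simp add: field_simps)
    also have "\<dots> = H0" unfolding H0_def log_def N_def L_def ..
    finally show ?thesis .
  qed
  have Hc: "input_entropy n 2 (replicate m c) = H0" for c
  proof -
    have "replicate m c \<in> binseqs m" by (simp add: binseqs_def)
    then have "input_entropy n 2 (replicate m c) = log 2 S - F (replicate m c) / (ln 2 * S)" by (rule HF)
    also have "F (replicate m c) = F0" unfolding F0_def by (rule F_const[OF m1])
    finally show ?thesis using H0eq by simp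
  qed
  have ge: "H0 \<le> input_entropy n 2 y" if y: "y \<in> binseqs m" for y
  proof -
    have len: "length y = m" using y by (simp add: binseqs_def)
    have "F y \<le> F0" unfolding F0_def by (rule F_bound(1)[OF len m1])
    then have "F y / (ln 2 * S) \<le> F0 / (ln 2 * S)" using ln2 S0 by (intro divide_right_mono) auto
    then show ?thesis using HF[OF y] H0eq by linarith
  qed
  have gt: "H0 < input_entropy n 2 y" if y: "y \<in> binseqs m" and nc: "y \<notin> {replicate m False, replicate m True}" for y
  proof -
    have len: "length y = m" using y by (simp add: binseqs_def)
    have t: "True \<in> set y" and f: "False \<in> set y" using nonconst[OF len] nc by auto
    have "F y < F0" unfolding F0_def by (rule F_bound(2)[OF len m1 t f])
    then have "F y / (ln 2 * S) < F0 / (ln 2 * S)" using ln2 S0 by (intro divide_strict_right_mono) auto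
    then show ?thesis using HF[OF y] H0eq by linarith
  qed
  have memb: "replicate m c \<in> binseqs m" for c by (simp add: binseqs_def)
  have set_eq: "{y \<in> binseqs m. \<forall>z\<in>binseqs m. input_entropy n 2 y \<le> input_entropy n 2 z}
            = {replicate m False, replicate m True}"
  proof
    show "{y \<in> binseqs m. \<forall>z\<in>binseqs m. input_entropy n 2 y \<le> input_entropy n 2 z}
            \<subseteq> {replicate m False, replicate m True}"
    proof
      fix y assume "y \<in> {y \<in> binseqs m. \<forall>z\<in>binseqs m. input_entropy n 2 y \<le> input_entropy n 2 z}"
      then have y: "y \<in> binseqs m" and le: "input_entropy n 2 y \<le> input_entropy n 2 (replicate m False)"
        using memb by auto
      show "y \<in> {replicate m False, replicate m True}"
      proof (rule ccontr)
        assume "y \<notin> {replicate m False, replicate m True}"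
        then have "H0 < input_entropy n 2 y" using gt y by blast
        then show False using le Hc[of False] by linarith
      qed
    qed
    show "{replicate m False, replicate m True}
        \<subseteq> {y \<in> binseqs m. \<forall>z\<in>binseqs m. input_entropy n 2 y \<le> input_entropy n 2 z}"
      using memb Hc ge by auto
  qed
  have min_eq: "(MIN y\<in>binseqs m. input_entropy n 2 y) = H0"
  proof (rule Min_eqI)
    show "finite ((\<lambda>y. input_entropy n 2 y) ` binseqs m)" by simp
    show "\<And>x. x \<in> (\<lambda>y. input_entropy n 2 y) ` binseqs m \<Longrightarrow> H0 \<le> x" using ge by auto
    show "H0 \<in> (\<lambda>y. input_entropy n 2 y) ` binseqs m" using memb[of False] Hc[of False] by (metis image_eqI)
  qed
  show ?thesis using set_eq min_eq unfolding H0_def by simp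
qed

end
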